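(* Let $A$ be a nonempty finite set of $n$ alternatives. A choice rule $C$ on $A$ is responsive if and only if it satisfies capacity-filling and the capacity-wise weaker axiom of revealed preference (CWrARP).
   Context: Let $\mathcal{A}$ be the set of nonempty subsets of $A$. A choice rule assigns to each $(S,q)\in\mathcal{A}\times\{1,\dots,n\}$ a nonempty set $C(S,q)\subseteq S$ with $|C(S,q)|\le q$. A priority ordering is a complete, transitive, antisymmetric binary relation on $A$. $C$ is responsive for a priority ordering $\succ$ if for each $(S,q)$, $C(S,q)$ is obtained by choosing the highest $\succ$-priority alternatives in $S$ until $q$ alternatives are chosen or no alternative is left; $C$ is responsive if it is responsive for some priority ordering. Capacity-filling: $|C(S,q)|=\min\{|S|,q\}$ for all $(S,q)$. CWrARP: for each $S,S'\in\mathcal{A}$, $q,q'\in\{1,\dots,n\}$ and each $a,b\in S\cap S'$, if $a\in C(S,q)$ and $b\in C(S',q')\setminus C(S,q)$, then $a\in C(S',q')$. *)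

theory Defs
  imports Main
begin

definition dom_pairs :: "'a set \<Rightarrow> ('a set \<times> nat) set" where
  "dom_pairs A = {(S, q). S \<subseteq> A \<and> S \<noteq> {} \<and> 1 \<le> q \<and> q \<le> card A}"

definition choice_rule :: "'a set \<Rightarrow> ('a set \<Rightarrow> nat \<Rightarrow> 'a set) \<Rightarrow> bool" where
  "choice_rule A C \<longleftrightarrow> (\<forall>(S, q) \<in> dom_pairs A. C S q \<noteq> {} \<and> C S q \<subseteq> S \<and> card (C S q) \<le> q)"

text \<open>A priority ordering on A: complete, transitive, antisymmetric (hence reflexive) relation on A.
  (b, a) \<in> P means b has (weakly) higher priority than a.\<close>
definition priority_ordering :: "'a set \<Rightarrow> ('a \<times> 'a) set \<Rightarrow> bool" where
  "priority_ordering A P \<longleftrightarrow> P \<subseteq> A \<times> A \<and> linear_order_on A P"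

text \<open>Choosing the highest-priority alternatives of S until q are chosen or none is left:
  a is chosen iff fewer than q alternatives of S have strictly higher priority than a.\<close>
definition top_choice :: "('a \<times> 'a) set \<Rightarrow> 'a set \<Rightarrow> nat \<Rightarrow> 'a set" where
  "top_choice P S q = {a \<in> S. card {b \<in> S. (b, a) \<in> P \<and> b \<noteq> a} < q}"

definition responsive_for :: "'a set \<Rightarrow> ('a \<times> 'a) set \<Rightarrow> ('a set \<Rightarrow> nat \<Rightarrow> 'a set) \<Rightarrow> bool" where
  "responsive_for A P C \<longleftrightarrow> (\<forall>(S, q) \<in> dom_pairs A. C S q = top_choice P S q)"

definition responsive :: "'a set \<Rightarrow> ('a set \<Rightarrow> nat \<Rightarrow> 'a set) \<Rightarrow> bool" where
  "responsive A C \<longleftrightarrow> (\<exists>P. priority_ordering A P \<and> responsive_for A P C)"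

definition capacity_filling :: "'a set \<Rightarrow> ('a set \<Rightarrow> nat \<Rightarrow> 'a set) \<Rightarrow> bool" where
  "capacity_filling A C \<longleftrightarrow> (\<forall>(S, q) \<in> dom_pairs A. card (C S q) = min (card S) q)"

definition CWrARP :: "'a set \<Rightarrow> ('a set \<Rightarrow> nat \<Rightarrow> 'a set) \<Rightarrow> bool" where
  "CWrARP A C \<longleftrightarrow> (\<forall>(S, q) \<in> dom_pairs A. \<forall>(S', q') \<in> dom_pairs A. \<forall>a \<in> S \<inter> S'. \<forall>b \<in> S \<inter> S'.
      a \<in> C S q \<and> b \<in> C S' q' - C S q \<longrightarrow> a \<in> C S' q')"

end

theory Submission
  imports Defs
begin

definition bet :: "('a \<times> 'a) set \<Rightarrow> 'a set \<Rightarrow> 'a \<Rightarrow> 'a set" where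
  "bet P S a = {b \<in> S. (b, a) \<in> P \<and> b \<noteq> a}"

lemma top_choice_bet: "top_choice P S q = {a \<in> S. card (bet P S a) < q}"
  unfolding top_choice_def bet_def by simp

lemma bet_less:
  assumes "trans P" "antisym P" "finite S" "a \<in> S" "(a, b) \<in> P" "a \<noteq> b"
  shows "card (bet P S a) < card (bet P S b)"
proof (rule psubset_card_mono)
  show "finite (bet P S b)" using assms(3) unfolding bet_def by simp
  have "bet P S a \<subseteq> bet P S b"
    unfolding bet_def using assms by (auto dest: transD antisymD)
  moreover have "a \<in> bet P S b" "a \<notin> bet P S a" unfolding bet_def using assms by auto
  ultimately show "bet P S a \<subset> bet P S b" by blast
qed

lemma card_top:
  assumes "trans P" "antisym P" "total_on A P" "finite S" "S \<subseteq> A"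
  shows "card (top_choice P S q) = min (card S) q"
proof -
  define r where "r = (\<lambda>a. card (bet P S a))"
  have inj: "inj_on r S"
  proof (rule inj_onI)
    fix a b assume ab: "a \<in> S" "b \<in> S" "r a = r b"
    show "a = b"
    proof (rule ccontr)
      assume "a \<noteq> b"
      then have "(a, b) \<in> P \<or> (b, a) \<in> P" using assms(3,5) ab unfolding total_on_def by blast
      then show False using bet_less[OF assms(1,2,4)] ab \<open>a \<noteq> b\<close> unfolding r_def by force
    qed
  qed
  have rng: "r ` S \<subseteq> {0..<card S}"
  proof
    fix x assume "x \<in> r ` S"
    then obtain a where a: "a \<in> S" "x = r a" by blast
    have "bet P S a \<subseteq> S - {a}" unfolding bet_def by auto
    then have "r a \<le> card (S - {a})" unfolding r_def using assms(4) by (intro card_mono) auto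
    also have "\<dots> < card S" using a assms(4) by (intro card_Diff1_less)
    finally show "x \<in> {0..<card S}" using a by simp
  qed
  have "card (r ` S) = card S" using inj by (simp add: card_image)
  then have img: "r ` S = {0..<card S}" using rng by (intro card_subset_eq) auto
  have "top_choice P S q = {a \<in> S. r a < q}" unfolding top_choice_bet r_def by simp
  moreover have "r ` {a \<in> S. r a < q} = {0..<card S} \<inter> {..<q}" using img by auto
  moreover have "inj_on r {a \<in> S. r a < q}" using inj by (rule inj_on_subset) auto
  ultimately have "card (top_choice P S q) = card ({0..<card S} \<inter> {..<q})"
    by (metis card_image)
  also have "{0..<card S} \<inter> {..<q} = {0..<min (card S) q}" by auto
  finally show ?thesis by simp
qed

lemma lemL:
  assumes cr: "choice_rule A C" and cw: "CWrARP A C" and fin: "finite A"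
    and Sq: "(S, q) \<in> dom_pairs A" and a: "a \<in> C S q" and b: "b \<in> S" "b \<notin> C S q"
  shows "b \<notin> C {a, b} 1"
proof
  assume bC: "b \<in> C {a, b} 1"
  have aS: "a \<in> S" using cr Sq a unfolding choice_rule_def by blast
  have "S \<subseteq> A" using Sq unfolding dom_pairs_def by auto
  then have "card A \<ge> 1" using aS fin by (metis One_nat_def Suc_leI card_gt_0_iff empty_iff subsetD)
  then have d2: "({a, b}, 1) \<in> dom_pairs A" using aS b \<open>S \<subseteq> A\<close> unfolding dom_pairs_def by auto
  have "a \<in> C {a, b} 1" using cw Sq d2 aS b a bC unfolding CWrARP_def by fastforce
  moreover have "card (C {a, b} 1) \<le> 1" "finite (C {a,b} 1)"
    using cr d2 unfolding choice_rule_def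
    by (auto intro: finite_subset[of _ "{a,b}"])
  moreover have "a \<noteq> b" using a b by auto
  ultimately show False using bC by (metis card_le_Suc0_iff_eq One_nat_def)
qed

theorem theorem2:
  fixes A :: "'a set" and C :: "'a set \<Rightarrow> nat \<Rightarrow> 'a set"
  assumes "finite A" and "A \<noteq> {}" and "choice_rule A C"
  shows "responsive A C \<longleftrightarrow> capacity_filling A C \<and> CWrARP A C"
proof
  assume "responsive A C"
  then obtain P where po: "priority_ordering A P" and rf: "responsive_for A P C"
    unfolding responsive_def by blast
  have PA: "P \<subseteq> A \<times> A" and tr: "trans P" and an: "antisym P" and to: "total_on A P"
    using po unfolding priority_ordering_def linear_order_on_def partial_order_on_def preorder_on_def
    by auto
  have Ceq: "C S q = top_choice P S q" if "(S, q) \<in> dom_pairs A" for S q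
    using rf that unfolding responsive_for_def by auto
  have "capacity_filling A C"
    unfolding capacity_filling_def
  proof (clarify)
    fix S q assume d: "(S, q) \<in> dom_pairs A"
    then have "S \<subseteq> A" unfolding dom_pairs_def by auto
    then show "card (C S q) = min (card S) q"
      using Ceq[OF d] card_top[OF tr an to] assms(1) finite_subset by metis
  qed
  moreover have "CWrARP A C"
    unfolding CWrARP_def
  proof (clarify)
    fix S q S' q' a b
    assume d: "(S, q) \<in> dom_pairs A" and d': "(S', q') \<in> dom_pairs A"
      and ab: "a \<in> S" "a \<in> S'" "b \<in> S" "b \<in> S'" "a \<in> C S q" "b \<in> C S' q'" "b \<notin> C S q"
    have fS: "finite S" "finite S'" "S \<subseteq> A" using d d' assms(1) unfolding dom_pairs_def
      by (auto intro: finite_subset)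
    have a1: "card (bet P S a) < q" using ab Ceq[OF d] unfolding top_choice_bet by auto
    have b1: "\<not> card (bet P S b) < q" using ab Ceq[OF d] unfolding top_choice_bet by auto
    have b2: "card (bet P S' b) < q'" using ab Ceq[OF d'] unfolding top_choice_bet by auto
    have "a \<noteq> b" using ab by auto
    have "(b, a) \<notin> P"
    proof
      assume "(b, a) \<in> P"
      then have "card (bet P S b) < card (bet P S a)" using bet_less[OF tr an fS(1)] ab \<open>a \<noteq> b\<close> by auto
      then show False using a1 b1 by linarith
    qed
    then have "(a, b) \<in> P" using to fS(3) ab \<open>a \<noteq> b\<close> unfolding total_on_def by blast
    then have "card (bet P S' a) < card (bet P S' b)" using bet_less[OF tr an fS(2)] ab \<open>a \<noteq> b\<close> by auto
    then show "a \<in> C S' q'" using b2 ab Ceq[OF d'] unfolding top_choice_bet by auto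
  qed
  ultimately show "capacity_filling A C \<and> CWrARP A C" by blast
next
  assume "capacity_filling A C \<and> CWrARP A C"
  then have cf: "capacity_filling A C" and cw: "CWrARP A C" by auto
  note cr = assms(3)
  have cA: "card A \<ge> 1" using assms(1,2) by (simp add: Suc_leI card_gt_0_iff)
  have d2: "({a, b}, 1) \<in> dom_pairs A" if "a \<in> A" "b \<in> A" for a b
    using that cA unfolding dom_pairs_def by auto
  have C2: "C {a, b} 1 \<noteq> {} \<and> C {a, b} 1 \<subseteq> {a, b} \<and> card (C {a, b} 1) \<le> 1"
    if "a \<in> A" "b \<in> A" for a b
    using cr d2[OF that] unfolding choice_rule_def by auto
  have C2u: "x = y" if "a \<in> A" "b \<in> A" "x \<in> C {a, b} 1" "y \<in> C {a, b} 1" for a b x y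
  proof -
    have "finite (C {a, b} 1)" using C2[OF that(1,2)] finite_subset by blast
    then show ?thesis using C2[OF that(1,2)] that(3,4) by (metis card_le_Suc0_iff_eq One_nat_def)
  qed
  define P where "P = {(b, a). a \<in> A \<and> b \<in> A \<and> (b = a \<or> b \<in> C {a, b} 1)}"
  have L: "b \<notin> C {a, b} 1" if "(S, q) \<in> dom_pairs A" "a \<in> C S q" "b \<in> S" "b \<notin> C S q" for S q a b
    using lemL[OF cr cw assms(1) that] .
  have domS: "S \<subseteq> A" "finite S" if "(S, q) \<in> dom_pairs A" for S q
    using that assms(1) unfolding dom_pairs_def by (auto intro: finite_subset)
  have PA: "P \<subseteq> A \<times> A" unfolding P_def by auto
  have refl: "refl_on A P" unfolding refl_on_def P_def by auto
  have an: "antisym P"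
  proof (rule antisymI)
    fix x y assume "(x, y) \<in> P" "(y, x) \<in> P"
    then show "x = y" unfolding P_def using C2u by (auto simp: insert_commute)
  qed
  have to: "total_on A P"
    unfolding total_on_def
  proof (intro ballI impI)
    fix x y assume xy: "x \<in> A" "y \<in> A" "x \<noteq> y"
    then obtain z where "z \<in> C {x, y} 1" using C2 by blast
    then have "z = x \<or> z = y" "z \<in> C {x, y} 1" using C2[OF xy(1,2)] by auto
    then show "(x, y) \<in> P \<or> (y, x) \<in> P" unfolding P_def using xy by (auto simp: insert_commute)
  qed
  have tr: "trans P"
  proof (rule transI)
    fix x y z assume xy: "(x, y) \<in> P" and yz: "(y, z) \<in> P"
    have A3: "x \<in> A" "y \<in> A" "z \<in> A" using xy yz PA by auto
    show "(x, z) \<in> P"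
    proof (cases "x = y \<or> y = z \<or> x = z")
      case True
      then show ?thesis using xy yz refl A3 unfolding refl_on_def by auto
    next
      case False
      have xy': "x \<in> C {y, x} 1" using xy False unfolding P_def by auto
      have yz': "y \<in> C {z, y} 1" using yz False unfolding P_def by auto
      have d3: "({x, y, z}, 1) \<in> dom_pairs A" using A3 cA unfolding dom_pairs_def by auto
      then obtain w where w: "w \<in> C {x, y, z} 1" using cr unfolding choice_rule_def by fastforce
      have wu: "v \<notin> C {x, y, z} 1" if "v \<noteq> w" for v
      proof
        assume "v \<in> C {x, y, z} 1"
        moreover have "finite (C {x, y, z} 1)" "card (C {x, y, z} 1) \<le> 1" "C {x, y, z} 1 \<subseteq> {x,y,z}"
          using cr d3 unfolding choice_rule_def by (auto intro: finite_subset[of _ "{x,y,z}"])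
        ultimately show False using w that by (metis card_le_Suc0_iff_eq One_nat_def)
      qed
      have "w \<in> {x, y, z}" using w cr d3 unfolding choice_rule_def by fastforce
      then consider "w = x" | "w = y" | "w = z" by auto
      then show ?thesis
      proof cases
        case 1
        have "z \<notin> C {x, z} 1" using L[OF d3, of x z] w 1 wu[of z] False by auto
        then have "x \<in> C {z, x} 1" using C2[of z x] A3 by (auto simp: insert_commute)
        then show ?thesis unfolding P_def using A3 by auto
      next
        case 2
        have "x \<notin> C {y, x} 1" using L[OF d3, of y x] w 2 wu[of x] False by auto
        then show ?thesis using xy' by blast
      next
        case 3
        have "y \<notin> C {z, y} 1" using L[OF d3, of z y] w 3 wu[of y] False by auto
        then show ?thesis using yz' by blast
      qed
    qed
  qed
  have po: "priority_ordering A P"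
    unfolding priority_ordering_def linear_order_on_def partial_order_on_def preorder_on_def
    using PA refl an to tr by auto
  have "responsive_for A P C"
    unfolding responsive_for_def
  proof (clarify)
    fix S q assume d: "(S, q) \<in> dom_pairs A"
    have fS: "finite S" "S \<subseteq> A" using domS[OF d] by auto
    have sub: "C S q \<subseteq> top_choice P S q"
    proof
      fix a assume a: "a \<in> C S q"
      have aS: "a \<in> S" and cq: "card (C S q) \<le> q" and cS: "C S q \<subseteq> S"
        using a cr d unfolding choice_rule_def by auto
      have "bet P S a \<subseteq> C S q - {a}"
      proof
        fix b assume "b \<in> bet P S a"
        then have b: "b \<in> S" "(b, a) \<in> P" "b \<noteq> a" unfolding bet_def by auto
        then have "b \<in> C {a, b} 1" unfolding P_def by (auto simp: insert_commute)
        then have "b \<in> C S q" using L[OF d a b(1)] by blast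
        then show "b \<in> C S q - {a}" using b by auto
      qed
      moreover have "finite (C S q)" using cS fS finite_subset by blast
      ultimately have "card (bet P S a) \<le> card (C S q - {a})" by (intro card_mono) auto
      also have "\<dots> < card (C S q)" using a \<open>finite (C S q)\<close> by (intro card_Diff1_less)
      finally show "a \<in> top_choice P S q" using cq aS unfolding top_choice_bet by auto
    qed
    have "card (C S q) = min (card S) q" using cf d unfolding capacity_filling_def by auto
    also have "\<dots> = card (top_choice P S q)" using card_top[OF tr an to fS(1,2)] by simp
    finally show "C S q = top_choice P S q"
      using sub fS(1) by (intro card_subset_eq) (auto simp: top_choice_def)
  qed
  then show "responsive A C" unfolding responsive_def using po by blast
qed

end
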